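(* Let $n,d$ be positive integers such that $n$ or $d$ is odd. Then for all but finitely many primes $p$ (the exceptional set depending on $n$ and $d$), for every power $q$ of $p$, \[ \frac{1}{|\mathrm{Conf}_n(\mathbb{F}_q)|}\sum_{f\in \mathrm{Conf}_n(\mathbb{F}_q)} |X_f(\mathbb{F}_q)| = q . \]
   Context: $\mathrm{Conf}_n(\mathbb{F}_q)$ denotes the set of monic, square-free polynomials $f\in\mathbb{F}_q[x]$ of degree $n$ (square-free meaning distinct roots in $\overline{\mathbb{F}}_q$). For such $f$, $X_f$ is the affine curve $y^d=f(x)$ and $X_f(\mathbb{F}_q)=\{(x,y)\in\mathbb{F}_q^2: y^d=f(x)\}$. *)

theory Defs
  imports "HOL-Computational_Algebra.Primes" "HOL-Algebra.Polynomial_Divisibility"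
begin

text \<open>Over a finite (perfect) field this is equivalent to having distinct
 roots in an algebraic closure.\<close>
definition sqfree_poly :: "('a, 'b) ring_scheme \<Rightarrow> 'a list \<Rightarrow> bool" where
  "sqfree_poly R f \<longleftrightarrow>
     (\<forall>g \<in> carrier (poly_ring R).
        (g \<otimes>\<^bsub>poly_ring R\<^esub> g) divides\<^bsub>poly_ring R\<^esub> f \<longrightarrow> g \<in> Units (poly_ring R))"

definition Conf :: "('a, 'b) ring_scheme \<Rightarrow> nat \<Rightarrow> 'a list set" where
  "Conf R n = {f \<in> carrier (poly_ring R). degree f = n \<and> lead_coeff f = \<one>\<^bsub>R\<^esub> \<and> sqfree_poly R f}"

definition curve_points :: "('a, 'b) ring_scheme \<Rightarrow> nat \<Rightarrow> 'a list \<Rightarrow> ('a \<times> 'a) set" where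
  "curve_points R d f = {(x, y). x \<in> carrier R \<and> y \<in> carrier R \<and> y [^]\<^bsub>R\<^esub> d = ring.eval R f x}"

end

theory Submission
  imports Defs
begin


definition Mon :: "('a, 'b) ring_scheme \<Rightarrow> nat \<Rightarrow> 'a list set" where
  "Mon R m = {f \<in> carrier (poly_ring R). f \<noteq> [] \<and> degree f = m \<and> hd f = \<one>\<^bsub>R\<^esub>}"

definition SF :: "('a, 'b) ring_scheme \<Rightarrow> nat \<Rightarrow> 'a list set" where
  "SF R m = {f \<in> Mon R m. sqfree_poly R f}"

locale ffield = field R for R (structure) +
  assumes fin: "finite (carrier R)"
begin

abbreviation P where "P \<equiv> poly_ring R"

end

sublocale ffield \<subseteq> PP: principal_domain "poly_ring R"
  using univ_poly_is_principal[OF carrier_is_subfield] .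

context ffield
begin

lemma P_domain: "domain P"
  using univ_poly_is_domain[OF carrier_is_subring] .

lemma P_pd: "principal_domain P"
  using univ_poly_is_principal[OF carrier_is_subfield] .

lemma Mon_alt: "Mon R m = (\<lambda>l. \<one> # l) ` {l. set l \<subseteq> carrier R \<and> length l = m}"
proof -
  have "f \<in> Mon R m \<longleftrightarrow> f \<in> (\<lambda>l. \<one> # l) ` {l. set l \<subseteq> carrier R \<and> length l = m}" for f
  proof (cases f)
    case Nil then show ?thesis by (auto simp: Mon_def)
  next
    case (Cons a l) then show ?thesis
      by (auto simp: Mon_def sym[OF univ_poly_carrier] polynomial_def)
  qed
  then show ?thesis by blast
qed

lemma Mon_card: "card (Mon R m) = card (carrier R) ^ m"
  unfolding Mon_alt by (subst card_image) (auto simp: inj_on_def card_lists_length_eq fin)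

lemma Mon_finite: "finite (Mon R m)"
  unfolding Mon_alt by (auto intro!: finite_lists_length_eq fin)

lemma Mon_mem: "f \<in> Mon R m \<longleftrightarrow> f \<noteq> [] \<and> set f \<subseteq> carrier R \<and> length f = Suc m \<and> hd f = \<one>"
  by (cases f) (auto simp: Mon_def sym[OF univ_poly_carrier] polynomial_def)

lemma Mon_eval_bij:
  assumes x: "x \<in> carrier R" and c: "c \<in> carrier R"
  shows "bij_betw (\<lambda>l. l @ [c \<ominus> eval l x \<otimes> x]) (Mon R k) {f \<in> Mon R (Suc k). eval f x = c}"
proof (rule bij_betw_byWitness[where f' = butlast])
  show "\<forall>a\<in>Mon R k. butlast (a @ [c \<ominus> eval a x \<otimes> x]) = a" by simp
  show "\<forall>a'\<in>{f \<in> Mon R (Suc k). eval f x = c}. butlast a' @ [c \<ominus> eval (butlast a') x \<otimes> x] = a'"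
  proof
    fix f assume f: "f \<in> {f \<in> Mon R (Suc k). eval f x = c}"
    then have f1: "f \<noteq> []" "set f \<subseteq> carrier R" "eval f x = c" by (auto simp: Mon_mem)
    have fe: "f = butlast f @ [last f]" using f1 by simp
    have sb: "set (butlast f) \<subseteq> carrier R" "last f \<in> carrier R"
      using f1 by (auto dest: in_set_butlastD)
    have "c = eval (butlast f) x \<otimes> x \<oplus> last f"
      using eval_append_aux[OF sb x] fe f1 by simp
    moreover have "eval (butlast f) x \<in> carrier R" using eval_in_carrier[OF sb(1) x] .
    ultimately have "c \<ominus> eval (butlast f) x \<otimes> x = last f"
      using sb x by (simp, algebra)
    then show "butlast f @ [c \<ominus> eval (butlast f) x \<otimes> x] = f" using fe by simp
  qed
  show "(\<lambda>l. l @ [c \<ominus> eval l x \<otimes> x]) ` Mon R k \<subseteq> {f \<in> Mon R (Suc k). eval f x = c}"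
  proof (rule image_subsetI)
    fix l assume l: "l \<in> Mon R k"
    then have l1: "l \<noteq> []" "set l \<subseteq> carrier R" "length l = Suc k" "hd l = \<one>" by (auto simp: Mon_mem)
    have e: "eval l x \<in> carrier R" using eval_in_carrier[OF l1(2) x] .
    have b: "c \<ominus> eval l x \<otimes> x \<in> carrier R" using e x c by simp
    have m: "l @ [c \<ominus> eval l x \<otimes> x] \<in> Mon R (Suc k)" using l1 b by (simp add: Mon_mem)
    have "eval (l @ [c \<ominus> eval l x \<otimes> x]) x = c"
      using eval_append_aux[OF l1(2) b x] e x c by (simp, algebra)
    with m show "l @ [c \<ominus> eval l x \<otimes> x] \<in> {f \<in> Mon R (Suc k). eval f x = c}" by simp
  qed
  show "butlast ` {f \<in> Mon R (Suc k). eval f x = c} \<subseteq> Mon R k"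
  proof clarify
    fix f assume f: "f \<in> Mon R (Suc k)"
    then have f1: "f \<noteq> []" "set f \<subseteq> carrier R" "length f = Suc (Suc k)" "hd f = \<one>" by (auto simp: Mon_mem)
    then obtain a b f' where "f = a # b # f'" by (metis length_Suc_conv)
    then show "butlast f \<in> Mon R k" using f1 by (auto simp: Mon_mem dest: in_set_butlastD)
  qed
qed

lemma Mon_eval_card:
  assumes x: "x \<in> carrier R" and c: "c \<in> carrier R"
  shows "card {f \<in> Mon R (Suc k). eval f x = c} = card (carrier R) ^ k"
  using bij_betw_same_card[OF Mon_eval_bij[OF x c, of k]] Mon_card by simp

lemma Mon0: "Mon R 0 = {[\<one>]}"
  by (auto simp: Mon_mem length_Suc_conv)


lemma carrierP: "p \<in> carrier P \<longleftrightarrow> polynomial (carrier R) p"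
  by (simp add: univ_poly_carrier)

lemma multP: "p \<otimes>\<^bsub>P\<^esub> q = poly_mult p q"
  by (simp add: univ_poly_mult)

lemma oneP: "\<one>\<^bsub>P\<^esub> = [\<one>]" by (simp add: univ_poly_one)
lemma zeroP: "\<zero>\<^bsub>P\<^esub> = []" by (simp add: univ_poly_zero)

lemma mult_props:
  assumes "p \<in> carrier P" "q \<in> carrier P" "p \<noteq> []" "q \<noteq> []"
  shows "p \<otimes>\<^bsub>P\<^esub> q \<noteq> []" "degree (p \<otimes>\<^bsub>P\<^esub> q) = degree p + degree q"
        "hd (p \<otimes>\<^bsub>P\<^esub> q) = hd p \<otimes> hd q"
  using poly_mult_integral[OF carrier_is_subring, of p q] poly_mult_degree_eq[OF carrier_is_subring, of p q]
     poly_mult_lead_coeff[OF carrier_is_subring, of p q] assms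
  by (auto simp: multP carrierP)

lemma unitP: "p \<in> Units P \<longleftrightarrow> p \<in> carrier P \<and> p \<noteq> [] \<and> degree p = 0"
  using univ_poly_units'[OF carrier_is_subfield] .

lemma Mon_carrier: "f \<in> Mon R m \<Longrightarrow> f \<in> carrier P"
  by (simp add: Mon_def)

lemma Mon_iff: "f \<in> Mon R m \<longleftrightarrow> f \<in> carrier P \<and> f \<noteq> [] \<and> degree f = m \<and> hd f = \<one>"
  by (simp add: Mon_def)

lemma Mon_mult: "g \<in> Mon R a \<Longrightarrow> h \<in> Mon R b \<Longrightarrow> g \<otimes>\<^bsub>P\<^esub> h \<in> Mon R (a + b)"
  using mult_props[of g h] PP.m_closed[of g h] by (auto simp: Mon_iff)

lemma hd_carrier: "k \<in> carrier P \<Longrightarrow> k \<noteq> [] \<Longrightarrow> hd k \<in> carrier R"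
  by (cases k) (auto simp: carrierP polynomial_def)

lemma Mon_factor:
  assumes "g \<in> Mon R a" "k \<in> carrier P" "g \<otimes>\<^bsub>P\<^esub> k \<in> Mon R b"
  shows "a \<le> b \<and> k \<in> Mon R (b - a)"
proof -
  have "k \<noteq> []" using assms PP.r_null[of g] by (auto simp: Mon_iff zeroP)
  then show ?thesis using mult_props[of g k] assms hd_carrier[of k] by (auto simp: Mon_iff)
qed

lemma Mon_deg0: "f \<in> Mon R 0 \<longleftrightarrow> f = [\<one>]"
  using Mon0 by blast

lemma Mon_unit: "f \<in> Mon R m \<Longrightarrow> f \<in> Units P \<longleftrightarrow> m = 0"
  by (auto simp: Mon_iff unitP)



lemma inv_facts:
  assumes "u \<in> carrier R" "u \<noteq> \<zero>"
  shows "inv u \<in> carrier R" "inv u \<noteq> \<zero>" "inv u \<otimes> u = \<one>" "u \<otimes> inv u = \<one>"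
proof -
  have U: "u \<in> Units R" using assms field_Units by auto
  show "inv u \<in> carrier R" "inv u \<otimes> u = \<one>" "u \<otimes> inv u = \<one>" using U by auto
  show "inv u \<noteq> \<zero>" using U \<open>inv u \<otimes> u = \<one>\<close> assms(1) by (metis l_null one_not_zero)
qed

lemma const_carrier: "a \<in> carrier R \<Longrightarrow> a \<noteq> \<zero> \<Longrightarrow> [a] \<in> carrier P"
  by (auto simp: carrierP polynomial_def)

lemma const_mult: "a \<in> carrier R \<Longrightarrow> a \<noteq> \<zero> \<Longrightarrow> b \<in> carrier R \<Longrightarrow> b \<noteq> \<zero> \<Longrightarrow> [a] \<otimes>\<^bsub>P\<^esub> [b] = [a \<otimes> b]"
  using poly_mult_const(1)[OF carrier_is_subring, of "[b]" a] by (auto simp: multP polynomial_def)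

lemma monic_normalize:
  assumes g: "g \<in> carrier P" "g \<noteq> []"
  shows "[inv (hd g)] \<otimes>\<^bsub>P\<^esub> g \<in> Mon R (degree g)"
        "g = [hd g] \<otimes>\<^bsub>P\<^esub> ([inv (hd g)] \<otimes>\<^bsub>P\<^esub> g)"
        "[hd g] \<in> carrier P" "[inv (hd g)] \<in> carrier P"
proof -
  have u: "hd g \<in> carrier R" "hd g \<noteq> \<zero>" using g by (cases g, auto simp: carrierP polynomial_def)+
  note iv = inv_facts[OF u]
  show c1: "[inv (hd g)] \<in> carrier P" "[hd g] \<in> carrier P" using const_carrier iv u by auto
  show "[inv (hd g)] \<otimes>\<^bsub>P\<^esub> g \<in> Mon R (degree g)"
    using mult_props[of "[inv (hd g)]" g] c1 g iv PP.m_closed[of "[inv (hd g)]" g] by (auto simp: Mon_iff)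
  have "[hd g] \<otimes>\<^bsub>P\<^esub> ([inv (hd g)] \<otimes>\<^bsub>P\<^esub> g) = ([hd g] \<otimes>\<^bsub>P\<^esub> [inv (hd g)]) \<otimes>\<^bsub>P\<^esub> g"
    using c1 g by (simp add: PP.m_assoc)
  also have "\<dots> = g" using const_mult[of "hd g" "inv (hd g)"] u iv g by (simp add: oneP[symmetric])
  finally show "g = [hd g] \<otimes>\<^bsub>P\<^esub> ([inv (hd g)] \<otimes>\<^bsub>P\<^esub> g)" by simp
qed

lemma decomp_exists:
  "f \<in> Mon R m \<Longrightarrow> \<exists>g h j. 2*j \<le> m \<and> g \<in> Mon R j \<and> h \<in> SF R (m - 2*j) \<and> f = g \<otimes>\<^bsub>P\<^esub> g \<otimes>\<^bsub>P\<^esub> h"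
proof (induction m arbitrary: f rule: less_induct)
  case (less m f)
  have fc: "f \<in> carrier P" "f \<noteq> []" using less.prems by (auto simp: Mon_iff)
  show ?case
  proof (cases "sqfree_poly R f")
    case True
    then have "f \<in> SF R m" using less.prems by (simp add: SF_def)
    moreover have "[\<one>] \<otimes>\<^bsub>P\<^esub> [\<one>] \<otimes>\<^bsub>P\<^esub> f = f" using fc by (simp add: oneP[symmetric])
    moreover have "[\<one>] \<in> Mon R 0" using Mon0 by blast
    ultimately have "2*0 \<le> m \<and> [\<one>] \<in> Mon R 0 \<and> f \<in> SF R (m - 2*0) \<and> f = [\<one>] \<otimes>\<^bsub>P\<^esub> [\<one>] \<otimes>\<^bsub>P\<^esub> f"
      by simp
    then show ?thesis by blast
  next
    case False
    then obtain g where g: "g \<in> carrier P" "(g \<otimes>\<^bsub>P\<^esub> g) divides\<^bsub>P\<^esub> f" "g \<notin> Units P"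
      unfolding sqfree_poly_def by auto
    then obtain k where k: "k \<in> carrier P" "f = g \<otimes>\<^bsub>P\<^esub> g \<otimes>\<^bsub>P\<^esub> k" by (auto simp: factor_def)
    have gne: "g \<noteq> []"
    proof
      assume "g = []"
      then have "f = \<zero>\<^bsub>P\<^esub> \<otimes>\<^bsub>P\<^esub> \<zero>\<^bsub>P\<^esub> \<otimes>\<^bsub>P\<^esub> k" using k(2) by (simp only: zeroP)
      then have "f = \<zero>\<^bsub>P\<^esub>" using k(1) by simp
      then show False using fc zeroP by simp
    qed
    have dg: "degree g \<noteq> 0" using g gne unitP by auto
    note mn = monic_normalize[OF g(1) gne]
    define g' where "g' = [inv (hd g)] \<otimes>\<^bsub>P\<^esub> g"
    define k' where "k' = [hd g] \<otimes>\<^bsub>P\<^esub> [hd g] \<otimes>\<^bsub>P\<^esub> k"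
    have g'm: "g' \<in> Mon R (degree g)" using mn(1) g'_def by simp
    have g'c: "g' \<in> carrier P" using g'm Mon_carrier by blast
    have k'c: "k' \<in> carrier P" using k'_def mn(3) k by simp
    have "f = ([hd g] \<otimes>\<^bsub>P\<^esub> g') \<otimes>\<^bsub>P\<^esub> ([hd g] \<otimes>\<^bsub>P\<^esub> g') \<otimes>\<^bsub>P\<^esub> k"
      using k(2) mn(2) unfolding g'_def[symmetric] by metis
    also have "\<dots> = g' \<otimes>\<^bsub>P\<^esub> (g' \<otimes>\<^bsub>P\<^esub> k')"
      unfolding k'_def using mn(3) g'c k by (simp add: PP.m_ac)
    finally have f2: "f = g' \<otimes>\<^bsub>P\<^esub> (g' \<otimes>\<^bsub>P\<^esub> k')" .
    have s1: "degree g \<le> m \<and> g' \<otimes>\<^bsub>P\<^esub> k' \<in> Mon R (m - degree g)"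
      using Mon_factor[OF g'm _ ] f2 less.prems g'c k'c by (metis PP.m_closed)
    have s2: "degree g \<le> m - degree g \<and> k' \<in> Mon R (m - degree g - degree g)"
      using Mon_factor[OF g'm k'c] s1 by blast
    obtain g2 h j where IH: "2*j \<le> m - degree g - degree g" "g2 \<in> Mon R j"
        "h \<in> SF R (m - degree g - degree g - 2*j)" "k' = g2 \<otimes>\<^bsub>P\<^esub> g2 \<otimes>\<^bsub>P\<^esub> h"
    proof -
      have lt: "m - degree g - degree g < m" using dg s1 by arith
      show ?thesis using less.IH[OF lt conjunct2[OF s2]] that by blast
    qed
    have g2c: "g2 \<in> carrier P" using IH Mon_carrier by blast
    have hc: "h \<in> carrier P" using IH by (auto simp: SF_def Mon_iff)
    have "f = (g' \<otimes>\<^bsub>P\<^esub> g2) \<otimes>\<^bsub>P\<^esub> (g' \<otimes>\<^bsub>P\<^esub> g2) \<otimes>\<^bsub>P\<^esub> h"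
      using f2 IH(4) g'c g2c hc by (simp add: PP.m_ac)
    moreover have "g' \<otimes>\<^bsub>P\<^esub> g2 \<in> Mon R (degree g + j)" using Mon_mult[OF g'm IH(2)] .
    moreover have "m - 2 * (degree g + j) = m - degree g - degree g - 2*j" by simp
    ultimately show ?thesis using IH s1 s2
      by (intro exI[of _ "g' \<otimes>\<^bsub>P\<^esub> g2"] exI[of _ h] exI[of _ "degree g + j"]) auto
  qed
qed

abbreviation pm (infixl "\<odot>" 70) where "a \<odot> b \<equiv> a \<otimes>\<^bsub>P\<^esub> b"

lemma const_inv:
  assumes "u \<in> carrier R" "u \<noteq> \<zero>"
  shows "[inv u] \<odot> [u] = \<one>\<^bsub>P\<^esub>" "[u] \<odot> [inv u] = \<one>\<^bsub>P\<^esub>"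
  using const_mult[of "inv u" u] const_mult[of u "inv u"] inv_facts[OF assms] assms oneP by auto

lemma sqfree_factor:
  assumes "h \<in> SF R a" "g \<in> Mon R j" "k \<in> carrier P" "h = g \<odot> g \<odot> k"
  shows "j = 0"
proof -
  have gc: "g \<in> carrier P" using assms Mon_carrier by blast
  have "(g \<odot> g) divides\<^bsub>P\<^esub> h" using assms(3,4) by (intro dividesI) auto
  then have "g \<in> Units P" using assms(1) gc unfolding SF_def sqfree_poly_def by blast
  then show ?thesis using Mon_unit[OF assms(2)] by blast
qed

lemma SF_carrier: "h \<in> SF R a \<Longrightarrow> h \<in> carrier P"
  by (auto simp: SF_def Mon_iff)

lemma SF_ne: "h \<in> SF R a \<Longrightarrow> h \<noteq> []"
  by (auto simp: SF_def Mon_iff)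

lemma prime_div3:
  assumes "prime P b" "b \<in> carrier P" "x \<in> carrier P" "y \<in> carrier P" "z \<in> carrier P"
    "b divides\<^bsub>P\<^esub> x \<odot> y \<odot> z"
  shows "b divides\<^bsub>P\<^esub> x \<or> b divides\<^bsub>P\<^esub> y \<or> b divides\<^bsub>P\<^esub> z"
  using assms unfolding prime_def by (meson PP.m_closed)

lemma decomp_unique:
  "g1 \<in> Mon R j1 \<Longrightarrow> g2 \<in> Mon R j2 \<Longrightarrow> h1 \<in> SF R a \<Longrightarrow> h2 \<in> SF R b \<Longrightarrow>
   g1 \<odot> g1 \<odot> h1 = g2 \<odot> g2 \<odot> h2 \<Longrightarrow> g1 = g2 \<and> h1 = h2"
proof (induction j1 arbitrary: g1 g2 j2 h1 h2 a b rule: less_induct)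
  case (less j1 g1 g2 j2 h1 h2 a b)
  have c: "g1 \<in> carrier P" "g2 \<in> carrier P" "h1 \<in> carrier P" "h2 \<in> carrier P"
    using less.prems Mon_carrier SF_carrier by blast+
  show ?case
  proof (cases "j1 = 0")
    case True
    then have g1: "g1 = \<one>\<^bsub>P\<^esub>" using less.prems(1) Mon_deg0 oneP by auto
    then have e: "h1 = g2 \<odot> g2 \<odot> h2" using less.prems(5) c by simp
    then have "j2 = 0" using sqfree_factor[OF less.prems(3) less.prems(2) c(4)] by blast
    then have g2: "g2 = \<one>\<^bsub>P\<^esub>" using less.prems(2) Mon_deg0 oneP by auto
    show ?thesis using g1 g2 e c by simp
  next
    case False
    note j1 = False
    show ?thesis
    proof (cases "j2 = 0")
      case True
      then have g2: "g2 = \<one>\<^bsub>P\<^esub>" using less.prems(2) Mon_deg0 oneP by auto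
      then have e: "h2 = g1 \<odot> g1 \<odot> h1" using less.prems(5) c by simp
      then have "j1 = 0" using sqfree_factor[OF less.prems(4) less.prems(1) c(3)] by blast
      then show ?thesis using j1 by blast
    next
      case False
      note j2 = False
      have g1ne: "g1 \<noteq> \<zero>\<^bsub>P\<^esub>" "g1 \<notin> Units P"
        using less.prems(1) j1 Mon_unit[OF less.prems(1)] zeroP by (auto simp: Mon_iff)
      obtain p where p: "p \<in> carrier P" "ring_irreducible\<^bsub>P\<^esub> p" "p divides\<^bsub>P\<^esub> g1"
        using PP.exists_irreducible_divisor[of g1] g1ne c by blast
      have pr: "ring_prime\<^bsub>P\<^esub> p" using PP.primeness_condition[OF p(1)] p(2) by blast
      have pp: "prime P p" "p \<noteq> \<zero>\<^bsub>P\<^esub>" using PP.ring_primeE[OF p(1) pr] by auto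
      have pnu: "p \<notin> Units P" using pp(1) unfolding prime_def by blast
      have pne: "p \<noteq> []" using pp zeroP by auto
      have dp: "degree p \<noteq> 0" using pnu unitP p(1) pne by auto
      obtain a1 where a1: "a1 \<in> carrier P" "g1 = p \<odot> a1" using p(3) by (auto elim: dividesE)
      have "p divides\<^bsub>P\<^esub> g2 \<odot> g2 \<odot> h2"
        using less.prems(5) a1 c p(1) by (intro dividesI[of "a1 \<odot> g1 \<odot> h1"]) (auto simp: PP.m_ac)
      then have "p divides\<^bsub>P\<^esub> g2 \<or> p divides\<^bsub>P\<^esub> h2" using prime_div3[OF pp(1) p(1) c(2) c(2) c(4)] by blast
      have pg2: "p divides\<^bsub>P\<^esub> g2"
      proof (rule ccontr)
        assume npg2: "\<not> p divides\<^bsub>P\<^esub> g2"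
        then have "p divides\<^bsub>P\<^esub> h2" using \<open>p divides\<^bsub>P\<^esub> g2 \<or> p divides\<^bsub>P\<^esub> h2\<close> by blast
        then obtain c1 where c1: "c1 \<in> carrier P" "h2 = p \<odot> c1" by (auto elim: dividesE)
        have "p \<odot> (p \<odot> a1 \<odot> a1 \<odot> h1) = p \<odot> (g2 \<odot> g2 \<odot> c1)"
          using less.prems(5) a1 c1 c p(1) by (simp add: PP.m_ac)
        then have "p \<odot> a1 \<odot> a1 \<odot> h1 = g2 \<odot> g2 \<odot> c1"
          using PP.m_lcancel[OF pp(2) p(1)] a1 c1 c p(1) by simp
        then have "p divides\<^bsub>P\<^esub> g2 \<odot> g2 \<odot> c1"
          using a1 c p(1) by (intro dividesI[of "a1 \<odot> a1 \<odot> h1"]) (auto simp: PP.m_ac)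
        then have "p divides\<^bsub>P\<^esub> c1" using prime_div3[OF pp(1) p(1) c(2) c(2) c1(1)] npg2 by blast
        then obtain e1 where e1: "e1 \<in> carrier P" "c1 = p \<odot> e1" by (auto elim: dividesE)
        have "h2 = p \<odot> p \<odot> e1" using c1 e1 p(1) by (simp add: PP.m_assoc)
        then have "(p \<odot> p) divides\<^bsub>P\<^esub> h2" using e1 by (intro dividesI) auto
        then have "p \<in> Units P" using less.prems(4) p(1) unfolding SF_def sqfree_poly_def by blast
        then show False using pnu by blast
      qed
      obtain a2 where a2: "a2 \<in> carrier P" "g2 = p \<odot> a2" using pg2 by (auto elim: dividesE)
      have "p \<odot> (p \<odot> (a1 \<odot> a1 \<odot> h1)) = p \<odot> (p \<odot> (a2 \<odot> a2 \<odot> h2))"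
        using less.prems(5) a1 a2 c p(1) by (simp add: PP.m_ac)
      then have eqa: "a1 \<odot> a1 \<odot> h1 = a2 \<odot> a2 \<odot> h2"
        using PP.m_lcancel[OF pp(2) p(1)] a1 a2 c p(1) by simp
      define u where "u = hd p"
      have u: "u \<in> carrier R" "u \<noteq> \<zero>" using hd_carrier[OF p(1) pne] p(1) pne unfolding u_def
        by (cases p, auto simp: carrierP polynomial_def)+
      note mn = monic_normalize[OF p(1) pne]
      define p' where "p' = [inv u] \<odot> p"
      have p'm: "p' \<in> Mon R (degree p)" using mn(1) unfolding p'_def u_def .
      have p'c: "p' \<in> carrier P" using p'm Mon_carrier by blast
      have uc: "[u] \<in> carrier P" "[inv u] \<in> carrier P" using mn(3,4) unfolding u_def by auto
      have g1': "g1 = p' \<odot> ([u] \<odot> a1)"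
      proof -
        have "p' \<odot> ([u] \<odot> a1) = ([inv u] \<odot> [u]) \<odot> p \<odot> a1"
          unfolding p'_def using uc a1 p(1) by (simp add: PP.m_ac)
        then show ?thesis using const_inv[OF u] a1 p(1) by simp
      qed
      have g2': "g2 = p' \<odot> ([u] \<odot> a2)"
      proof -
        have "p' \<odot> ([u] \<odot> a2) = ([inv u] \<odot> [u]) \<odot> p \<odot> a2"
          unfolding p'_def using uc a2 p(1) by (simp add: PP.m_ac)
        then show ?thesis using const_inv[OF u] a2 p(1) by simp
      qed
      have m1: "degree p \<le> j1 \<and> [u] \<odot> a1 \<in> Mon R (j1 - degree p)"
        using Mon_factor[OF p'm _ ] g1' less.prems(1) uc a1 by (metis PP.m_closed)
      have m2: "[u] \<odot> a2 \<in> Mon R (j2 - degree p)"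
        using Mon_factor[OF p'm _ ] g2' less.prems(2) uc a2 by (metis PP.m_closed)
      have eq': "([u] \<odot> a1) \<odot> ([u] \<odot> a1) \<odot> h1 = ([u] \<odot> a2) \<odot> ([u] \<odot> a2) \<odot> h2"
      proof -
        have "([u] \<odot> a1) \<odot> ([u] \<odot> a1) \<odot> h1 = [u] \<odot> [u] \<odot> (a1 \<odot> a1 \<odot> h1)"
          using uc a1 c by (simp add: PP.m_ac)
        also have "\<dots> = [u] \<odot> [u] \<odot> (a2 \<odot> a2 \<odot> h2)" using eqa by simp
        also have "\<dots> = ([u] \<odot> a2) \<odot> ([u] \<odot> a2) \<odot> h2"
          using uc a2 c by (simp add: PP.m_ac)
        finally show ?thesis .
      qed
      have lt: "j1 - degree p < j1" using dp j1 by arith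
      have "[u] \<odot> a1 = [u] \<odot> a2 \<and> h1 = h2"
        using less.IH[OF lt conjunct2[OF m1] m2 less.prems(3,4) eq'] .
      then show ?thesis using g1' g2' by simp
    qed
  qed
qed

end

context ffield begin

definition DD :: "nat \<Rightarrow> ('a list \<times> 'a list) set" where
  "DD m = {(g,h). \<exists>j. 2*j \<le> m \<and> g \<in> Mon R j \<and> h \<in> SF R (m - 2*j)}"

lemma DD_bij: "bij_betw (\<lambda>(g,h). g \<odot> g \<odot> h) (DD m) (Mon R m)"
proof (rule bij_betw_imageI)
  show "inj_on (\<lambda>(g,h). g \<odot> g \<odot> h) (DD m)"
  proof (rule inj_onI, clarify)
    fix g1 h1 g2 h2 assume "(g1,h1) \<in> DD m" "(g2,h2) \<in> DD m" "g1 \<odot> g1 \<odot> h1 = g2 \<odot> g2 \<odot> h2"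
    then show "g1 = g2 \<and> h1 = h2" unfolding DD_def using decomp_unique by blast
  qed
  show "(\<lambda>(g,h). g \<odot> g \<odot> h) ` DD m = Mon R m"
  proof
    show "(\<lambda>(g,h). g \<odot> g \<odot> h) ` DD m \<subseteq> Mon R m"
    proof clarify
      fix g h assume "(g,h) \<in> DD m"
      then obtain j where j: "2*j \<le> m" "g \<in> Mon R j" "h \<in> SF R (m - 2*j)" unfolding DD_def by blast
      have "h \<in> Mon R (m - 2*j)" using j(3) unfolding SF_def by blast
      then have "g \<odot> g \<odot> h \<in> Mon R (j + j + (m - 2*j))" using Mon_mult[OF Mon_mult[OF j(2) j(2)]] by blast
      moreover have "j + j + (m - 2*j) = m" using j(1) by simp
      ultimately show "g \<odot> g \<odot> h \<in> Mon R m" by simp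
    qed
    show "Mon R m \<subseteq> (\<lambda>(g,h). g \<odot> g \<odot> h) ` DD m"
    proof
      fix f assume "f \<in> Mon R m"
      then obtain g h j where "2*j \<le> m" "g \<in> Mon R j" "h \<in> SF R (m - 2*j)" "f = g \<odot> g \<odot> h"
        using decomp_exists by blast
      then show "f \<in> (\<lambda>(g,h). g \<odot> g \<odot> h) ` DD m" unfolding DD_def by (auto intro!: image_eqI[of _ _ "(g,h)"])
    qed
  qed
qed

lemma DD_alt: "DD m = (\<Union>j\<in>{..m div 2}. Mon R j \<times> SF R (m - 2*j))"
proof -
  have "2*j \<le> m \<longleftrightarrow> j \<le> m div 2" for j by auto
  then show ?thesis unfolding DD_def by blast
qed

lemma SF_finite: "finite (SF R k)"
  using Mon_finite unfolding SF_def by auto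

lemma Mon_disj: "j \<noteq> j' \<Longrightarrow> Mon R j \<inter> Mon R j' = {}"
  by (auto simp: Mon_iff)

lemma card_Mon_total: "card (carrier R) ^ m = (\<Sum>j\<in>{..m div 2}. card (carrier R) ^ j * card (SF R (m - 2*j)))"
proof -
  have "card (carrier R) ^ m = card (DD m)" using bij_betw_same_card[OF DD_bij[of m]] Mon_card by simp
  also have "\<dots> = (\<Sum>j\<in>{..m div 2}. card (Mon R j \<times> SF R (m - 2*j)))"
    unfolding DD_alt
    by (rule card_UN_disjoint) (auto simp: Mon_finite SF_finite dest: Mon_disj)
  also have "\<dots> = (\<Sum>j\<in>{..m div 2}. card (carrier R) ^ j * card (SF R (m - 2*j)))"
    by (simp add: card_cartesian_product Mon_card)
  finally show ?thesis .
qed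

lemma SF_card_pos: "m > 0 \<Longrightarrow> card (SF R m) > 0"
proof -
  assume m: "m > 0"
  have q: "card (carrier R) \<ge> 2"
  proof -
    have "{\<zero>, \<one>} \<subseteq> carrier R" by auto
    then have "card {\<zero>, \<one>} \<le> card (carrier R)" using fin card_mono by blast
    then show ?thesis by simp
  qed
  show ?thesis
  proof (cases "m = 1")
    case True
    then show ?thesis using card_Mon_total[of 1] q by simp
  next
    case False
    then obtain k where k: "m = Suc (Suc k)" using m by (metis less_2_cases_iff not_less_eq One_nat_def gr0_conv_Suc)
    have dv: "Suc (Suc k) div 2 = Suc (k div 2)" by simp
    have "card (carrier R) ^ Suc (Suc k) = card (SF R (Suc (Suc k))) +
         (\<Sum>j\<in>{..k div 2}. card (carrier R) ^ Suc j * card (SF R (Suc (Suc k) - 2 * Suc j)))"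
      using card_Mon_total[of "Suc (Suc k)"] unfolding dv sum.atMost_Suc_shift by simp
    also have "(\<Sum>j\<in>{..k div 2}. card (carrier R) ^ Suc j * card (SF R (Suc (Suc k) - 2 * Suc j)))
        = card (carrier R) * (\<Sum>j\<in>{..k div 2}. card (carrier R) ^ j * card (SF R (k - 2 * j)))"
      by (simp add: sum_distrib_left mult.assoc)
    also have "\<dots> = card (carrier R) ^ Suc k" using card_Mon_total[of k] by simp
    finally have "card (carrier R) ^ Suc (Suc k) = card (SF R (Suc (Suc k))) + card (carrier R) ^ Suc k" .
    moreover have "card (carrier R) ^ Suc k < card (carrier R) ^ Suc (Suc k)" using q by simp
    ultimately have "card (SF R (Suc (Suc k))) > 0" by linarith
    then show ?thesis using k by simp
  qed
qed

definition Bc :: "nat \<Rightarrow> 'a \<Rightarrow> 'a \<Rightarrow> nat" where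
  "Bc k x c = card {h \<in> SF R k. eval h x = c}"
definition Mc :: "nat \<Rightarrow> 'a \<Rightarrow> 'a \<Rightarrow> nat" where
  "Mc k x c = card {h \<in> Mon R k. eval h x = c}"

abbreviation GG where "GG \<equiv> carrier R - {\<zero>}"

lemma set_carrier: "p \<in> carrier P \<Longrightarrow> set p \<subseteq> carrier R"
  using polynomial_incl carrierP by blast

lemma eval_prod:
  assumes "g \<in> carrier P" "h \<in> carrier P" "x \<in> carrier R"
  shows "eval (g \<odot> g \<odot> h) x = eval g x \<otimes> eval g x \<otimes> eval h x"
proof -
  have gg: "g \<odot> g \<in> carrier P" using assms by simp
  have "eval (g \<odot> g \<odot> h) x = eval (g \<odot> g) x \<otimes> eval h x"
    using eval_poly_mult[OF set_carrier[OF gg] set_carrier[OF assms(2)] assms(3)] by (simp add: multP)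
  also have "eval (g \<odot> g) x = eval g x \<otimes> eval g x"
    using eval_poly_mult[OF set_carrier[OF assms(1)] set_carrier[OF assms(1)] assms(3)] by (simp add: multP)
  finally show ?thesis .
qed

lemma inv_solve:
  assumes "w \<in> carrier R" "w \<noteq> \<zero>" "z \<in> carrier R" "v \<in> carrier R"
  shows "w \<otimes> z = v \<longleftrightarrow> z = v \<otimes> inv w"
proof -
  note iv = inv_facts[OF assms(1,2)]
  show ?thesis
  proof
    assume "w \<otimes> z = v"
    then have "v \<otimes> inv w = (inv w \<otimes> w) \<otimes> z" using assms iv by (metis m_assoc m_comm)
    then show "z = v \<otimes> inv w" using iv assms by simp
  next
    assume "z = v \<otimes> inv w"
    then have "w \<otimes> z = (w \<otimes> inv w) \<otimes> v" using assms iv by (metis m_assoc m_comm)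
    then show "w \<otimes> z = v" using iv assms by simp
  qed
qed

lemma sq_solve:
  assumes "b \<in> carrier R" "e \<in> carrier R" "c \<in> carrier R" "c \<noteq> \<zero>"
  shows "b \<otimes> b \<otimes> e = c \<longleftrightarrow> b \<noteq> \<zero> \<and> e = c \<otimes> inv (b \<otimes> b)"
proof (cases "b = \<zero>")
  case True then show ?thesis using assms by auto
next
  case False
  then have "b \<otimes> b \<noteq> \<zero>" using assms integral by blast
  then show ?thesis using inv_solve[of "b \<otimes> b" e c] assms False by simp
qed

lemma image_filter_gen: "f ` {p \<in> S. Q (f p)} = {y \<in> f ` S. Q y}"
  by auto

lemma point_count:
  assumes x: "x \<in> carrier R" and c: "c \<in> GG"
  shows "Mc m x c = (\<Sum>j\<in>{..m div 2}. \<Sum>b\<in>GG. Mc j x b * Bc (m - 2*j) x (c \<otimes> inv (b \<otimes> b)))"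
proof -
  let ?F = "\<lambda>(g,h). g \<odot> g \<odot> h"
  let ?A = "{p \<in> DD m. eval (?F p) x = c}"
  have inj: "inj_on ?F ?A" using bij_betw_imp_inj_on[OF DD_bij[of m]] by (rule inj_on_subset) auto
  have img0: "?F ` ?A = {f \<in> ?F ` DD m. eval f x = c}" by (rule image_filter_gen)
  have img: "?F ` ?A = {f \<in> Mon R m. eval f x = c}"
    using img0 unfolding bij_betw_imp_surj_on[OF DD_bij[of m]] .
  have "Mc m x c = card ?A" unfolding Mc_def using card_image[OF inj] img by simp
  also have "?A = (\<Union>j\<in>{..m div 2}. \<Union>b\<in>GG. {g \<in> Mon R j. eval g x = b} \<times> {h \<in> SF R (m - 2*j). eval h x = c \<otimes> inv (b \<otimes> b)})"
  proof -
    have pw: "(g, h) \<in> ?A \<longleftrightarrow> (\<exists>j\<in>{..m div 2}. \<exists>b\<in>GG. g \<in> Mon R j \<and> eval g x = b \<and> h \<in> SF R (m - 2*j) \<and> eval h x = c \<otimes> inv (b \<otimes> b))"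
      for g h
    proof
      assume "(g, h) \<in> ?A"
      then have A: "(g, h) \<in> DD m" "eval (g \<odot> g \<odot> h) x = c" by auto
      then obtain j where j: "j \<in> {..m div 2}" "g \<in> Mon R j" "h \<in> SF R (m - 2*j)"
        unfolding DD_alt by blast
      have gc: "eval g x \<in> carrier R" "eval h x \<in> carrier R"
        using eval_in_carrier[OF set_carrier x] Mon_carrier[OF j(2)] SF_carrier[OF j(3)] by auto
      have "eval g x \<otimes> eval g x \<otimes> eval h x = c"
        using A(2) eval_prod[OF Mon_carrier[OF j(2)] SF_carrier[OF j(3)] x] by simp
      then have "eval g x \<noteq> \<zero> \<and> eval h x = c \<otimes> inv (eval g x \<otimes> eval g x)"
        using sq_solve[OF gc] c by blast
      then show "\<exists>j\<in>{..m div 2}. \<exists>b\<in>GG. g \<in> Mon R j \<and> eval g x = b \<and> h \<in> SF R (m - 2*j) \<and> eval h x = c \<otimes> inv (b \<otimes> b)"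
        using j gc by blast
    next
      assume "\<exists>j\<in>{..m div 2}. \<exists>b\<in>GG. g \<in> Mon R j \<and> eval g x = b \<and> h \<in> SF R (m - 2*j) \<and> eval h x = c \<otimes> inv (b \<otimes> b)"
      then obtain j b where j: "j \<in> {..m div 2}" "b \<in> GG" "g \<in> Mon R j" "eval g x = b" "h \<in> SF R (m - 2*j)"
        "eval h x = c \<otimes> inv (b \<otimes> b)" by blast
      have gc: "eval g x \<in> carrier R" "eval h x \<in> carrier R"
        using eval_in_carrier[OF set_carrier x] Mon_carrier[OF j(3)] SF_carrier[OF j(5)] by auto
      have "eval g x \<otimes> eval g x \<otimes> eval h x = c"
        using sq_solve[OF gc] c j by blast
      then have "eval (g \<odot> g \<odot> h) x = c"
        using eval_prod[OF Mon_carrier[OF j(3)] SF_carrier[OF j(5)] x] by simp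
      moreover have "(g, h) \<in> DD m" unfolding DD_alt using j by blast
      ultimately show "(g, h) \<in> ?A" by simp
    qed
    have pw2: "(g, h) \<in> (\<Union>j\<in>{..m div 2}. \<Union>b\<in>GG. {g \<in> Mon R j. eval g x = b} \<times> {h \<in> SF R (m - 2*j). eval h x = c \<otimes> inv (b \<otimes> b)})
       \<longleftrightarrow> (\<exists>j\<in>{..m div 2}. \<exists>b\<in>GG. g \<in> Mon R j \<and> eval g x = b \<and> h \<in> SF R (m - 2*j) \<and> eval h x = c \<otimes> inv (b \<otimes> b))" for g h
      by blast
    show ?thesis
    proof (rule Set.set_eqI)
      fix p :: "'a list \<times> 'a list"
      obtain g h where "p = (g, h)" by fastforce
      then show "p \<in> ?A \<longleftrightarrow> p \<in> (\<Union>j\<in>{..m div 2}. \<Union>b\<in>GG. {g \<in> Mon R j. eval g x = b} \<times> {h \<in> SF R (m - 2*j). eval h x = c \<otimes> inv (b \<otimes> b)})"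
        using pw[of g h] pw2[of g h] by (simp only:)
    qed
  qed
  also have "card \<dots> = (\<Sum>j\<in>{..m div 2}. card (\<Union>b\<in>GG. {g \<in> Mon R j. eval g x = b} \<times> {h \<in> SF R (m - 2*j). eval h x = c \<otimes> inv (b \<otimes> b)}))"
    by (rule card_UN_disjoint) (auto simp: Mon_finite SF_finite fin dest: Mon_disj)
  also have "\<dots> = (\<Sum>j\<in>{..m div 2}. \<Sum>b\<in>GG. card ({g \<in> Mon R j. eval g x = b} \<times> {h \<in> SF R (m - 2*j). eval h x = c \<otimes> inv (b \<otimes> b)}))"
    by (rule sum.cong[OF refl], rule card_UN_disjoint) (auto simp: Mon_finite SF_finite fin)
  also have "\<dots> = (\<Sum>j\<in>{..m div 2}. \<Sum>b\<in>GG. Mc j x b * Bc (m - 2*j) x (c \<otimes> inv (b \<otimes> b)))"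
    by (simp add: card_cartesian_product Mc_def Bc_def)
  finally show ?thesis .
qed

definition SS :: "nat \<Rightarrow> 'a \<Rightarrow> 'a \<Rightarrow> nat" where
  "SS k x c = (\<Sum>b\<in>GG. Bc k x (c \<otimes> inv (b \<otimes> b)))"

lemma Mc0: "x \<in> carrier R \<Longrightarrow> Mc 0 x b = (if b = \<one> then 1 else 0)"
proof -
  assume x: "x \<in> carrier R"
  have e: "eval [\<one>] x = \<one>" using x by simp
  have "{h \<in> Mon R 0. eval h x = b} = (if b = \<one> then {[\<one>]} else {})" using e by (auto simp: Mon0)
  then show ?thesis unfolding Mc_def by simp
qed

lemma recur:
  assumes x: "x \<in> carrier R" and c: "c \<in> GG" and m: "m > 0"
  shows "card (carrier R) ^ (m - 1) = Bc m x c + (\<Sum>j<m div 2. card (carrier R) ^ j * SS (m - 2 * Suc j) x c)"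
proof -
  have "card (carrier R) ^ (m - 1) = Mc m x c"
    using Mon_eval_card[OF x, of c "m - 1"] c m unfolding Mc_def by simp
  also have "\<dots> = (\<Sum>j\<le>m div 2. \<Sum>b\<in>GG. Mc j x b * Bc (m - 2*j) x (c \<otimes> inv (b \<otimes> b)))"
    using point_count[OF x c] .
  also have "\<dots> = (\<Sum>b\<in>GG. Mc 0 x b * Bc m x (c \<otimes> inv (b \<otimes> b))) +
      (\<Sum>j<m div 2. \<Sum>b\<in>GG. Mc (Suc j) x b * Bc (m - 2 * Suc j) x (c \<otimes> inv (b \<otimes> b)))"
    by (subst sum.atMost_shift) simp
  also have "(\<Sum>b\<in>GG. Mc 0 x b * Bc m x (c \<otimes> inv (b \<otimes> b))) = (\<Sum>b\<in>GG. if b = \<one> then Bc m x c else 0)"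
    by (rule sum.cong[OF refl]) (use c in \<open>simp add: Mc0[OF x]\<close>)
  also have "\<dots> = Bc m x c" by (simp add: fin)
  also have "(\<Sum>j<m div 2. \<Sum>b\<in>GG. Mc (Suc j) x b * Bc (m - 2 * Suc j) x (c \<otimes> inv (b \<otimes> b)))
      = (\<Sum>j<m div 2. card (carrier R) ^ j * SS (m - 2 * Suc j) x c)"
  proof (rule sum.cong[OF refl])
    fix j
    have "(\<Sum>b\<in>GG. Mc (Suc j) x b * Bc (m - 2 * Suc j) x (c \<otimes> inv (b \<otimes> b)))
        = (\<Sum>b\<in>GG. card (carrier R) ^ j * Bc (m - 2 * Suc j) x (c \<otimes> inv (b \<otimes> b)))"
      by (rule sum.cong[OF refl]) (simp add: Mc_def Mon_eval_card[OF x])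
    then show "(\<Sum>b\<in>GG. Mc (Suc j) x b * Bc (m - 2 * Suc j) x (c \<otimes> inv (b \<otimes> b)))
        = card (carrier R) ^ j * SS (m - 2 * Suc j) x c"
      by (simp add: SS_def sum_distrib_left)
  qed
  finally show ?thesis .
qed

lemma GG_closed: "c \<in> GG \<Longrightarrow> b \<in> GG \<Longrightarrow> c \<otimes> inv (b \<otimes> b) \<in> GG"
proof -
  assume c: "c \<in> GG" and b: "b \<in> GG"
  then have bb: "b \<otimes> b \<in> carrier R" "b \<otimes> b \<noteq> \<zero>" using integral by auto
  note iv = inv_facts[OF bb]
  then show ?thesis using c integral[of c "inv (b \<otimes> b)"] by auto
qed

lemma odd_const:
  assumes x: "x \<in> carrier R"
  shows "odd m \<Longrightarrow> c \<in> GG \<Longrightarrow> c' \<in> GG \<Longrightarrow> Bc m x c = Bc m x c'"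
proof (induction m arbitrary: c c' rule: less_induct)
  case (less m c c')
  have m: "m > 0" using less.prems by (cases m) auto
  have "SS (m - 2 * Suc j) x c = SS (m - 2 * Suc j) x c'" if j: "j < m div 2" for j
    unfolding SS_def
  proof (rule sum.cong[OF refl])
    fix b assume b: "b \<in> GG"
    have "m - 2 * Suc j < m" "odd (m - 2 * Suc j)" using j less.prems(1) m by (auto elim!: oddE)
    then show "Bc (m - 2 * Suc j) x (c \<otimes> inv (b \<otimes> b)) = Bc (m - 2 * Suc j) x (c' \<otimes> inv (b \<otimes> b))"
      using less.IH GG_closed[OF less.prems(2) b] GG_closed[OF less.prems(3) b] by blast
  qed
  then have "(\<Sum>j<m div 2. card (carrier R) ^ j * SS (m - 2 * Suc j) x c) =
             (\<Sum>j<m div 2. card (carrier R) ^ j * SS (m - 2 * Suc j) x c')" by simp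
  then show ?case using recur[OF x less.prems(2) m] recur[OF x less.prems(3) m] by linarith
qed

lemma GG_pow: "y \<in> GG \<Longrightarrow> y [^] (t::nat) \<in> GG"
proof -
  assume "y \<in> GG"
  then have "y \<in> Units R" using field_Units by auto
  then have "y [^] t \<in> Units R" by (rule Units_pow_closed)
  then show ?thesis using field_Units by auto
qed

lemma SS_odd_pow:
  assumes x: "x \<in> carrier R" and y: "y \<in> GG"
  shows "SS k x (y [^] (Suc (2*t))) = SS k x y"
proof -
  let ?u = "y [^] t"
  have u: "?u \<in> GG" using GG_pow[OF y] .
  have uU: "?u \<in> Units R" using u field_Units by auto
  have yd: "y [^] (Suc (2*t)) = ?u \<otimes> ?u \<otimes> y"
    using y by (simp add: nat_pow_mult[symmetric] mult_2)
  have key: "y [^] (Suc (2*t)) \<otimes> inv ((?u \<otimes> b) \<otimes> (?u \<otimes> b)) = y \<otimes> inv (b \<otimes> b)" if b: "b \<in> GG" for b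
  proof -
    have w: "(?u \<otimes> b) \<otimes> (?u \<otimes> b) \<in> carrier R" "(?u \<otimes> b) \<otimes> (?u \<otimes> b) \<noteq> \<zero>"
      using u b integral by auto
    have v: "b \<otimes> b \<in> carrier R" "b \<otimes> b \<noteq> \<zero>" using b integral by auto
    note iv = inv_facts[OF v]
    have z: "y \<otimes> inv (b \<otimes> b) \<in> carrier R" using y iv by auto
    have "((?u \<otimes> b) \<otimes> (?u \<otimes> b)) \<otimes> (y \<otimes> inv (b \<otimes> b)) = (?u \<otimes> ?u \<otimes> y) \<otimes> ((b \<otimes> b) \<otimes> inv (b \<otimes> b))"
      using u b y iv(1) by (simp add: m_ac)
    also have "\<dots> = (?u \<otimes> ?u \<otimes> y) \<otimes> \<one>" by (simp only: iv(4))
    also have "\<dots> = y [^] (Suc (2*t))" using yd u y by simp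
    finally have E: "((?u \<otimes> b) \<otimes> (?u \<otimes> b)) \<otimes> (y \<otimes> inv (b \<otimes> b)) = y [^] (Suc (2*t))" .
    have yc: "y [^] (Suc (2*t)) \<in> carrier R" using y by simp
    have "y \<otimes> inv (b \<otimes> b) = y [^] (Suc (2*t)) \<otimes> inv ((?u \<otimes> b) \<otimes> (?u \<otimes> b))"
      using iffD1[OF inv_solve[OF w z yc] E] .
    then show ?thesis by (rule sym)
  qed
  have "(\<Sum>b\<in>GG. Bc k x (y \<otimes> inv (b \<otimes> b))) = SS k x (y [^] (Suc (2*t)))"
    unfolding SS_def
  proof (rule sum.reindex_bij_witness[where i = "\<lambda>b. inv ?u \<otimes> b" and j = "\<lambda>b. ?u \<otimes> b"])
    fix b assume b: "b \<in> GG"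
    have uc: "?u \<in> carrier R" "inv ?u \<in> carrier R" "inv ?u \<otimes> ?u = \<one>" "?u \<otimes> inv ?u = \<one>"
      using uU by auto
    show "inv ?u \<otimes> (?u \<otimes> b) = b" using uc b by (simp add: m_assoc[symmetric])
    show "?u \<otimes> b \<in> GG" using u b integral by auto
    show "?u \<otimes> (inv ?u \<otimes> b) = b" using uc b by (simp add: m_assoc[symmetric])
    have "inv ?u \<in> Units R" using uU by simp
    then show "inv ?u \<otimes> b \<in> GG" using b integral field_Units by auto
    show "Bc k x (y [^] Suc (2 * t) \<otimes> inv (?u \<otimes> b \<otimes> (?u \<otimes> b))) = Bc k x (y \<otimes> inv (b \<otimes> b))"
      using key[OF b] by simp
  qed
  then show ?thesis unfolding SS_def by simp
qed

lemma Bc_odd_pow: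
  assumes x: "x \<in> carrier R" and y: "y \<in> GG" and m: "m > 0"
  shows "Bc m x (y [^] (Suc (2*t))) = Bc m x y"
proof -
  have yd: "y [^] (Suc (2*t)) \<in> GG" using GG_pow[OF y] .
  have "(\<Sum>j<m div 2. card (carrier R) ^ j * SS (m - 2 * Suc j) x (y [^] (Suc (2*t)))) =
        (\<Sum>j<m div 2. card (carrier R) ^ j * SS (m - 2 * Suc j) x y)"
    using SS_odd_pow[OF x y] by simp
  then show ?thesis using recur[OF x yd m] recur[OF x y m] by linarith
qed

lemma Bc_pow_pointwise:
  assumes x: "x \<in> carrier R" and y: "y \<in> carrier R" and n: "n > 0" and d: "d > 0"
    and odd: "odd n \<or> odd (d::nat)"
  shows "Bc n x (y [^] d) = Bc n x y"
proof (cases "y = \<zero>")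
  case True
  obtain d' where "d = Suc d'" using d by (cases d) auto
  then have "\<zero> [^] d = \<zero>" by simp
  then show ?thesis using True by simp
next
  case False
  then have yG: "y \<in> GG" using y by simp
  show ?thesis
  proof (cases "odd d")
    case True
    then obtain t where "d = Suc (2*t)" by (metis oddE Suc_eq_plus1 add.commute)
    then show ?thesis using Bc_odd_pow[OF x yG n] by simp
  next
    case False
    then have "odd n" using odd by simp
    then show ?thesis using odd_const[OF x] yG GG_pow[OF yG] by blast
  qed
qed

lemma card_swap:
  assumes "finite A" "finite B"
  shows "(\<Sum>a\<in>A. card {b\<in>B. Q a b}) = (\<Sum>b\<in>B. card {a\<in>A. Q a b})"
proof -
  have "(\<Sum>a\<in>A. card {b\<in>B. Q a b}) = (\<Sum>a\<in>A. \<Sum>b\<in>B. if Q a b then 1 else 0)"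
    using assms by (simp add: sum.inter_filter[symmetric])
  also have "\<dots> = (\<Sum>b\<in>B. \<Sum>a\<in>A. if Q a b then 1 else 0)" by (rule sum.swap)
  also have "\<dots> = (\<Sum>b\<in>B. card {a\<in>A. Q a b})"
    using assms by (simp add: sum.inter_filter[symmetric])
  finally show ?thesis .
qed

lemma Bc_total: "x \<in> carrier R \<Longrightarrow> (\<Sum>c\<in>carrier R. Bc n x c) = card (SF R n)"
proof -
  assume x: "x \<in> carrier R"
  have "(\<Sum>c\<in>carrier R. Bc n x c) = (\<Sum>h\<in>SF R n. card {c\<in>carrier R. eval h x = c})"
    unfolding Bc_def by (rule card_swap[OF fin SF_finite])
  also have "\<dots> = (\<Sum>h\<in>SF R n. 1)"
  proof (rule sum.cong[OF refl])
    fix h assume "h \<in> SF R n"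
    then have "eval h x \<in> carrier R" using eval_in_carrier[OF set_carrier[OF SF_carrier] x] by blast
    then have "{c\<in>carrier R. eval h x = c} = {eval h x}" by auto
    then show "card {c\<in>carrier R. eval h x = c} = 1" by simp
  qed
  finally show ?thesis by simp
qed

lemma main_count:
  assumes n: "n > 0" and d: "(d::nat) > 0" and odd: "odd n \<or> odd d"
  shows "(\<Sum>f\<in>SF R n. card (curve_points R d f)) = card (carrier R) * card (SF R n)"
proof -
  have cp: "curve_points R d f = Sigma (carrier R) (\<lambda>x. {y\<in>carrier R. y [^] d = eval f x})" for f
    unfolding curve_points_def by auto
  have "(\<Sum>f\<in>SF R n. card (curve_points R d f)) = (\<Sum>f\<in>SF R n. \<Sum>x\<in>carrier R. card {y\<in>carrier R. y [^] d = eval f x})"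
    unfolding cp by (rule sum.cong[OF refl], rule card_SigmaI) (auto simp: fin)
  also have "\<dots> = (\<Sum>x\<in>carrier R. \<Sum>f\<in>SF R n. card {y\<in>carrier R. y [^] d = eval f x})"
    by (rule sum.swap)
  also have "\<dots> = (\<Sum>x\<in>carrier R. \<Sum>y\<in>carrier R. Bc n x (y [^] d))"
    unfolding Bc_def by (rule sum.cong[OF refl], subst card_swap[OF SF_finite fin]) (simp add: eq_commute)
  also have "\<dots> = (\<Sum>x\<in>carrier R. \<Sum>y\<in>carrier R. Bc n x y)"
    using Bc_pow_pointwise[OF _ _ n d odd] by simp
  also have "\<dots> = (\<Sum>x\<in>carrier R. card (SF R n))" using Bc_total by simp
  finally show ?thesis by simp
qed

end

theorem corollary1p3:
  fixes n d :: nat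
  assumes "n > 0" and "d > 0" and "odd n \<or> odd d"
  shows "\<exists>S :: nat set. finite S \<and>
           (\<forall>p. Factorial_Ring.prime p \<and> p \<notin> S \<longrightarrow>
              (\<forall>(F :: nat ring) k. field F \<and> k > 0 \<and> card (carrier F) = p ^ k \<longrightarrow>
                 (\<Sum>f \<in> Conf F n. real (card (curve_points F d f))) / real (card (Conf F n))
                   = real (card (carrier F))))"
proof (intro exI[of _ "{}"] conjI allI impI)
  show "finite ({} :: nat set)" by simp
  fix p :: nat and F :: "nat ring" and k :: nat
  assume p: "Factorial_Ring.prime p \<and> p \<notin> {}"
  assume F: "field F \<and> k > 0 \<and> card (carrier F) = p ^ k"
  have "p > 0" using p prime_gt_0_nat by blast
  then have "card (carrier F) > 0" using F by simp
  then have fin: "finite (carrier F)" using card_ge_0_finite by blast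
  interpret FF: ffield F
    using F fin by (intro ffield.intro ffield_axioms.intro) auto
  have CS: "Conf F n = SF F n"
    using assms(1) unfolding Conf_def SF_def Mon_def by auto
  have pos: "card (SF F n) > 0" using FF.SF_card_pos assms(1) by blast
  have "(\<Sum>f \<in> Conf F n. real (card (curve_points F d f))) = real (\<Sum>f \<in> SF F n. card (curve_points F d f))"
    unfolding CS by simp
  also have "\<dots> = real (card (carrier F)) * real (card (SF F n))"
    using FF.main_count[OF assms] by simp
  finally show "(\<Sum>f \<in> Conf F n. real (card (curve_points F d f))) / real (card (Conf F n)) = real (card (carrier F))"
    using pos CS by simp
qed

end
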